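(* Let $p$ be a positive integer, let $1 \le r_1 \le \dots \le r_p$ be integers with $r_d \mid r_{d+1}$ for $d=1,\dots,p-1$, and let $\alpha \ge r_p$ be an integer. Then the edge-coloring $\psi_p$ of the complete graph on vertex set $\{0,1\}^\alpha$ defined below contains no striped $K_4$.
   Context: Set $r_0 = 1$ and $r_{p+1} = \alpha$. For $0 \le d \le p$ and a binary string $x$ of any length, write $x = (x^{(d)}_1, \dots, x^{(d)}_{m})$ for its decomposition into consecutive blocks, each of length $r_d$ except the last, which has length between $1$ and $r_d$. Define $\eta_d(x,y) = 0$ if $x=y$ and otherwise $\eta_d(x,y) = (i,\{x^{(d)}_i,y^{(d)}_i\})$ with $i$ the least index where $x^{(d)}_i \ne y^{(d)}_i$. For $x,y \in\{0,1\}^\alpha$ and $0\le d\le p$, decomposing $x,y$ into blocks of length $r_{d+1}$, $x=(x^{(d+1)}_1,\dots,x^{(d+1)}_{m'})$, set $\xi_d(x,y) = (\eta_d(x^{(d+1)}_1,y^{(d+1)}_1),\dots,\eta_d(x^{(d+1)}_{m'},y^{(d+1)}_{m'}))$ and $c_p(x,y) = (\xi_p(x,y),\dots,\xi_0(x,y))$. Order binary strings of each fixed length lexicographically. For $x<y$ in $\{0,1\}^\alpha$, with $x = (x^{(p)}_1,\dots,x^{(p)}_{a+1})$ the decomposition into blocks of length $r_p$, let $\delta_{p,i}(x,y) = +1$ if $x^{(p)}_i \le y^{(p)}_i$ and $-1$ if $x^{(p)}_i > y^{(p)}_i$, and $\Delta_p(x,y) = (\delta_{p,1}(x,y),\dots,\delta_{p,a+1}(x,y))$.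 Then $\psi_p$ assigns to the edge $\{x,y\}$, $x<y$, the color $(c_p(x,y), \Delta_p(x,y))$. A striped $K_4$ under an edge-coloring $f$ is a set of four vertices $\{a,b,c,e\}$ with $f(ab)=f(ce)$, $f(ac)=f(be)$, $f(ae)=f(bc)$, and $f(ab)$, $f(ac)$, $f(ae)$ pairwise distinct. *)

theory Defs
  imports Main
begin

text \<open>Binary strings are bool lists (False = 0, True = 1).\<close>

definition lex_less :: "bool list \<Rightarrow> bool list \<Rightarrow> bool" where
  "lex_less x y \<longleftrightarrow> length x = length y \<and>
     (\<exists>i < length x. take i x = take i y \<and> \<not> x ! i \<and> y ! i)"

definition lex_le :: "bool list \<Rightarrow> bool list \<Rightarrow> bool" where
  "lex_le x y \<longleftrightarrow> x = y \<or> lex_less x y"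

definition rseq :: "(nat \<Rightarrow> nat) \<Rightarrow> nat \<Rightarrow> nat \<Rightarrow> nat \<Rightarrow> nat" where
  "rseq r p \<alpha> d = (if d = 0 then 1 else if d = Suc p then \<alpha> else r d)"

text \<open>Decomposition into consecutive blocks of length k (last block of length 1..k).\<close>
definition blocks :: "nat \<Rightarrow> bool list \<Rightarrow> bool list list" where
  "blocks k x = map (\<lambda>i. take k (drop (i * k) x)) [0 ..< (length x + k - 1) div k]"

text \<open>eta: None plays the role of 0; otherwise (i, {x_i, y_i}) with i the least
  (1-based) index of differing blocks.\<close>
definition eta :: "nat \<Rightarrow> bool list \<Rightarrow> bool list \<Rightarrow> (nat \<times> bool list set) option" where
  "eta k x y = (if x = y then None else
     (let bx = blocks k x; by = blocks k y;
          i = (LEAST i. i < min (length bx) (length by) \<and> bx ! i \<noteq> by ! i)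
      in Some (Suc i, {bx ! i, by ! i})))"

definition xi :: "(nat \<Rightarrow> nat) \<Rightarrow> nat \<Rightarrow> nat \<Rightarrow> nat \<Rightarrow> bool list \<Rightarrow> bool list
                   \<Rightarrow> (nat \<times> bool list set) option list" where
  "xi r p \<alpha> d x y = map (\<lambda>(u, v). eta (rseq r p \<alpha> d) u v)
      (zip (blocks (rseq r p \<alpha> (Suc d)) x) (blocks (rseq r p \<alpha> (Suc d)) y))"

definition cp :: "(nat \<Rightarrow> nat) \<Rightarrow> nat \<Rightarrow> nat \<Rightarrow> bool list \<Rightarrow> bool list
                   \<Rightarrow> (nat \<times> bool list set) option list list" where
  "cp r p \<alpha> x y = map (\<lambda>d. xi r p \<alpha> d x y) (rev [0 ..< Suc p])"

definition Delta :: "(nat \<Rightarrow> nat) \<Rightarrow> nat \<Rightarrow> nat \<Rightarrow> bool list \<Rightarrow> bool list \<Rightarrow> int list" where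
  "Delta r p \<alpha> x y = map (\<lambda>(u, v). if lex_le u v then 1 else -1)
      (zip (blocks (rseq r p \<alpha> p) x) (blocks (rseq r p \<alpha> p) y))"

definition psi :: "(nat \<Rightarrow> nat) \<Rightarrow> nat \<Rightarrow> nat \<Rightarrow> bool list \<Rightarrow> bool list
                   \<Rightarrow> (nat \<times> bool list set) option list list \<times> int list" where
  "psi r p \<alpha> x y = (if lex_less x y then (cp r p \<alpha> x y, Delta r p \<alpha> x y)
                    else (cp r p \<alpha> y x, Delta r p \<alpha> y x))"

definition striped_K4 :: "('v \<Rightarrow> 'v \<Rightarrow> 'c) \<Rightarrow> 'v \<Rightarrow> 'v \<Rightarrow> 'v \<Rightarrow> 'v \<Rightarrow> bool" where
  "striped_K4 f a b c e \<longleftrightarrow> distinct [a, b, c, e] \<and>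
     f a b = f c e \<and> f a c = f b e \<and> f a e = f b c \<and>
     f a b \<noteq> f a c \<and> f a b \<noteq> f a e \<and> f a c \<noteq> f a e"

end

theory Submission
  imports Defs
begin

lemma lex_less_len: "lex_less x y \<Longrightarrow> length x = length y"
  by (simp add: lex_less_def)

lemma lex_less_irrefl: "\<not> lex_less x x"
  by (auto simp: lex_less_def)

lemma lex_less_asym: assumes "lex_less x y" shows "\<not> lex_less y x"
proof
  assume "lex_less y x"
  from assms obtain i where i: "i < length x" "take i x = take i y" "\<not> x ! i" "y ! i"
    by (auto simp: lex_less_def)
  from \<open>lex_less y x\<close> obtain j where j: "j < length y" "take j y = take j x" "\<not> y ! j" "x ! j"
    by (auto simp: lex_less_def)
  show False
  proof (cases i j rule: linorder_cases)
    case less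
    then have "x ! i = y ! i" using j(2) by (metis nth_take)
    then show ?thesis using i by simp
  next
    case equal then show ?thesis using i j by simp
  next
    case greater
    then have "x ! j = y ! j" using i(2) by (metis nth_take)
    then show ?thesis using j by simp
  qed
qed

lemma lex_less_trans: assumes "lex_less x y" "lex_less y z" shows "lex_less x z"
proof -
  from assms(1) obtain i where i: "i < length x" "take i x = take i y" "\<not> x ! i" "y ! i" "length x = length y"
    by (auto simp: lex_less_def)
  from assms(2) obtain j where j: "j < length y" "take j y = take j z" "\<not> y ! j" "z ! j" "length y = length z"
    by (auto simp: lex_less_def)
  show ?thesis
  proof (cases i j rule: linorder_cases)
    case less
    then have "take i x = take i z" using i(2) j(2) by (metis min.strict_order_iff take_take)
    moreover have "z ! i = y ! i" using j(2) less by (metis nth_take)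
    ultimately show ?thesis using i j unfolding lex_less_def by auto
  next
    case equal then show ?thesis using i j by simp
  next
    case greater
    then have "take j x = take j z" using i(2) j(2) by (metis min.strict_order_iff take_take)
    moreover have "x ! j = y ! j" using i(2) greater by (metis nth_take)
    ultimately show ?thesis using i j unfolding lex_less_def by auto
  qed
qed

lemma lex_less_total:
  assumes "length x = length y" "x \<noteq> y"
  shows "lex_less x y \<or> lex_less y x"
proof -
  have "\<exists>i < length x. x ! i \<noteq> y ! i" using assms list_eq_iff_nth_eq[of x y] by blast
  define n where "n = (LEAST i. i < length x \<and> x ! i \<noteq> y ! i)"
  have n: "n < length x" "x ! n \<noteq> y ! n"
    using LeastI_ex[OF \<open>\<exists>i < length x. x ! i \<noteq> y ! i\<close>] unfolding n_def by auto
  have "x ! j = y ! j" if "j < n" for j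
  proof -
    have "\<not> (j < length x \<and> x ! j \<noteq> y ! j)" using that unfolding n_def by (rule not_less_Least)
    then show ?thesis using that n(1) by auto
  qed
  then have "take n x = take n y"
    using assms(1) n(1) by (intro nth_equalityI) (auto simp: min_def)
  then show ?thesis using n assms(1) unfolding lex_less_def by (cases "x ! n") auto
qed

lemma psi_sym:
  assumes "length x = length y"
  shows "psi r p \<alpha> x y = psi r p \<alpha> y x"
proof (cases "x = y")
  case False
  then have "lex_less x y \<or> lex_less y x" using lex_less_total assms by blast
  then show ?thesis unfolding psi_def using lex_less_asym by auto
qed simp

lemma length_blocks: "length (blocks k x) = (length x + k - 1) div k"
  by (simp add: blocks_def)

lemma nth_blocks: "j < length (blocks k x) \<Longrightarrow> blocks k x ! j = take k (drop (j * k) x)"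
  by (simp add: blocks_def)

lemma blocks_full: assumes "length x = \<alpha>" "\<alpha> \<ge> 1" shows "blocks \<alpha> x = [x]"
proof -
  have a: "1 \<le> (\<alpha> + \<alpha> - 1) div \<alpha>"
    using assms(2) less_eq_div_iff_mult_less_eq[of \<alpha> 1 "\<alpha> + \<alpha> - 1"] by simp
  have b: "(\<alpha> + \<alpha> - 1) div \<alpha> < 2"
    using assms(2) div_less_iff_less_mult[of \<alpha> "\<alpha> + \<alpha> - 1" 2] by simp
  from a b have "(\<alpha> + \<alpha> - 1) div \<alpha> = 1" by simp
  then show ?thesis using assms by (simp add: blocks_def)
qed

lemma G:
  assumes "lex_less x y" "k \<ge> 1"
  shows "\<exists>i. i < length (blocks k x) \<and> i < length (blocks k y) \<and>
     eta k x y = Some (Suc i, {blocks k x ! i, blocks k y ! i}) \<and>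
     lex_less (blocks k x ! i) (blocks k y ! i)"
proof -
  from assms(1) obtain n where n: "n < length x" "take n x = take n y" "\<not> x ! n" "y ! n" "length x = length y"
    by (auto simp: lex_less_def)
  define i where "i = n div k"
  have nk: "n = i * k + n mod k" "n mod k < k" using assms(2) unfolding i_def by auto
  have ilen: "i < length (blocks k x)"
  proof -
    have "Suc i * k \<le> length x + k - 1" using nk n(1) by simp
    then have "Suc i \<le> (length x + k - 1) div k"
      using assms(2) less_eq_div_iff_mult_less_eq by simp
    then show ?thesis unfolding length_blocks by simp
  qed
  have ileny: "i < length (blocks k y)" using ilen n(5) by (simp add: length_blocks)
  have eqb: "blocks k x ! j = blocks k y ! j" if "j < i" for j
  proof -
    have jl: "j < length (blocks k x)" "j < length (blocks k y)" using that ilen ileny by auto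
    have le: "j * k + k \<le> n"
    proof -
      have "Suc j * k \<le> i * k" using that mult_le_mono1[of "Suc j" i k] by simp
      then have "i * k \<le> n" using nk by (metis le_add1)
      then show ?thesis using \<open>Suc j * k \<le> i * k\<close> by simp
    qed
    have "take k (drop (j * k) x) = drop (j*k) (take (k + j*k) x)" by (simp add: take_drop)
    also have "take (k + j*k) x = take (k + j*k) (take n x)" using le by simp
    also have "\<dots> = take (k + j*k) y" using n(2) le by (metis take_take min_absorb1 add.commute)
    finally show ?thesis using jl by (simp add: nth_blocks take_drop)
  qed
  have bx: "blocks k x ! i = take k (drop (i * k) x)" using ilen nth_blocks by blast
  have by': "blocks k y ! i = take k (drop (i * k) y)" using ileny nth_blocks by blast
  have ikn: "i * k \<le> n" using nk(1) by (metis le_add1)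
  have nth_b: "take k (drop (i * k) z) ! (n mod k) = z ! n" if "length z = length x" for z
  proof -
    have "take k (drop (i * k) z) ! (n mod k) = drop (i*k) z ! (n mod k)" using nk(2) by simp
    also have "\<dots> = z ! (i*k + n mod k)" using ikn n(1) that by (simp add: nth_drop)
    also have "\<dots> = z ! n" by (simp only: nk(1)[symmetric])
    finally show ?thesis .
  qed
  have bxn: "blocks k x ! i ! (n mod k) = x ! n" using bx nth_b[of x] by simp
  have byn: "blocks k y ! i ! (n mod k) = y ! n" using by' nth_b[of y] n(5) by simp
  have neq: "blocks k x ! i \<noteq> blocks k y ! i" using bxn byn n by auto
  have least: "(LEAST j. j < min (length (blocks k x)) (length (blocks k y)) \<and> blocks k x ! j \<noteq> blocks k y ! j) = i"
    apply (rule Least_equality)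
    using ilen ileny neq apply simp
    using eqb by (meson not_le)
  have xy: "x \<noteq> y" using n by auto
  have lenb: "length (blocks k x ! i) = length (blocks k y ! i)" using bx by' n(5) by simp
  have mlen: "n mod k < length (blocks k x ! i)" using bx nk n(1) by simp
  have tk0: "take (n mod k) (take k (drop (i * k) z)) = drop (i*k) (take n z)" for z
  proof -
    have "take (n mod k) (take k (drop (i * k) z)) = take (n mod k) (drop (i * k) z)"
      using nk(2) by (simp add: min_absorb1)
    also have "\<dots> = drop (i*k) (take (n mod k + i * k) z)" by (rule take_drop)
    also have "n mod k + i * k = n" using nk(1) by simp
    finally show ?thesis .
  qed
  have tk: "take (n mod k) (blocks k x ! i) = take (n mod k) (blocks k y ! i)"
    using tk0[of x] tk0[of y] bx by' n(2) by simp
  have "lex_less (blocks k x ! i) (blocks k y ! i)"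
    unfolding lex_less_def using lenb mlen tk bxn byn n by auto
  moreover have "eta k x y = Some (Suc i, {blocks k x ! i, blocks k y ! i})"
    unfolding eta_def using xy least by (simp add: Let_def)
  ultimately show ?thesis using ilen ileny by blast
qed

lemma r_pos: fixes r :: "nat \<Rightarrow> nat" assumes "1 \<le> r 1" "\<And>d. 1 \<le> d \<Longrightarrow> d < p \<Longrightarrow> r d \<le> r (Suc d)"
  shows "1 \<le> d \<Longrightarrow> d \<le> p \<Longrightarrow> 1 \<le> r d"
proof (induction d)
  case (Suc d)
  show ?case
  proof (cases "d = 0")
    case True then show ?thesis using assms(1) by simp
  next
    case False
    then have "1 \<le> r d" "r d \<le> r (Suc d)" using Suc assms(2)[of d] by auto
    then show ?thesis by linarith
  qed
qed simp

lemma cp_top: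
  assumes "length x = \<alpha>" "length y = \<alpha>" "\<alpha> \<ge> 1"
  shows "hd (cp r p \<alpha> x y) = [eta (rseq r p \<alpha> p) x y]"
proof -
  have "rev [0..<Suc p] = p # rev [0..<p]" by simp
  then show ?thesis
    using assms blocks_full[of x \<alpha>] blocks_full[of y \<alpha>]
    by (simp add: cp_def xi_def rseq_def)
qed

lemma Delta_nth:
  assumes "i < length (blocks (rseq r p \<alpha> p) x)" "i < length (blocks (rseq r p \<alpha> p) y)"
  shows "Delta r p \<alpha> x y ! i = (if lex_le (blocks (rseq r p \<alpha> p) x ! i) (blocks (rseq r p \<alpha> p) y ! i) then 1 else -1)"
  using assms by (simp add: Delta_def)

lemma K:
  assumes k: "rseq r p \<alpha> p \<ge> 1"
    and len: "length s1 = \<alpha>" "length s2 = \<alpha>" "length s3 = \<alpha>" "length s4 = \<alpha>"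
    and o: "lex_less s1 s2" "lex_less s2 s3" "lex_less s3 s4"
    and e1: "psi r p \<alpha> s1 s2 = psi r p \<alpha> s3 s4"
    and e2: "psi r p \<alpha> s1 s4 = psi r p \<alpha> s2 s3"
  shows False
proof -
  define k where "k = rseq r p \<alpha> p"
  have a1: "\<alpha> \<ge> 1" using o(1) len by (auto simp: lex_less_def)
  have o14: "lex_less s1 s4" using o lex_less_trans by blast
  have "cp r p \<alpha> s1 s2 = cp r p \<alpha> s3 s4" using e1 o by (simp add: psi_def)
  then have eeq: "eta k s1 s2 = eta k s3 s4"
    using cp_top[of s1 \<alpha> s2 r p] cp_top[of s3 \<alpha> s4 r p] len a1 k_def by simp
  have deq: "Delta r p \<alpha> s1 s4 = Delta r p \<alpha> s2 s3" using e2 o o14 by (simp add: psi_def)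
  obtain i where i: "i < length (blocks k s1)" "eta k s1 s2 = Some (Suc i, {blocks k s1 ! i, blocks k s2 ! i})"
     "lex_less (blocks k s1 ! i) (blocks k s2 ! i)"
    using G[OF o(1)] k k_def by blast
  obtain j where j: "eta k s3 s4 = Some (Suc j, {blocks k s3 ! j, blocks k s4 ! j})"
     "lex_less (blocks k s3 ! j) (blocks k s4 ! j)"
    using G[OF o(3)] k k_def by blast
  have ij: "i = j" and st: "{blocks k s1 ! i, blocks k s2 ! i} = {blocks k s3 ! i, blocks k s4 ! i}"
    using eeq i j by auto
  define A where "A = blocks k s1 ! i"
  define B where "B = blocks k s2 ! i"
  define C where "C = blocks k s3 ! i"
  define D where "D = blocks k s4 ! i"
  have AB: "lex_less A B" and CD: "lex_less C D" and st': "{A,B} = {C,D}"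
    using i j ij st A_def B_def C_def D_def by auto
  have "A = C \<and> B = D"
  proof (cases "A = C")
    case False
    then have "A = D" "B = C" using st' by (auto simp: doubleton_eq_iff)
    then show ?thesis using AB CD lex_less_asym by blast
  next
    case True then show ?thesis using st' AB lex_less_irrefl by (auto simp: doubleton_eq_iff)
  qed
  have lens: "\<And>x. length x = \<alpha> \<Longrightarrow> length (blocks k x) = length (blocks k s1)"
    using len by (simp add: length_blocks)
  have il: "i < length (blocks (rseq r p \<alpha> p) s1)" "i < length (blocks (rseq r p \<alpha> p) s2)"
     "i < length (blocks (rseq r p \<alpha> p) s3)" "i < length (blocks (rseq r p \<alpha> p) s4)"
    using i(1) len unfolding k_def by (simp_all add: length_blocks)
  have d1: "Delta r p \<alpha> s1 s4 ! i = (if lex_le A D then 1 else -1)"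
    using Delta_nth[OF il(1) il(4)] by (simp add: A_def D_def k_def)
  have d2: "Delta r p \<alpha> s2 s3 ! i = (if lex_le B C then 1 else -1)"
    using Delta_nth[OF il(2) il(3)] by (simp add: B_def C_def k_def)
  have "lex_le A D" using \<open>A = C \<and> B = D\<close> AB by (simp add: lex_le_def)
  moreover have "\<not> lex_le B C" using \<open>A = C \<and> B = D\<close> AB lex_less_asym[OF AB] lex_less_irrefl
    unfolding lex_le_def by auto
  moreover note d1 d2
  ultimately have "Delta r p \<alpha> s1 s4 ! i \<noteq> Delta r p \<alpha> s2 s3 ! i" by simp
  then show False using deq by simp
qed

theorem lemma2p3:
  fixes r :: "nat \<Rightarrow> nat" and p \<alpha> :: nat
  assumes "p \<ge> 1"
    and "1 \<le> r 1"
    and "\<And>d. 1 \<le> d \<Longrightarrow> d < p \<Longrightarrow> r d \<le> r (Suc d)"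
    and "\<And>d. 1 \<le> d \<Longrightarrow> d < p \<Longrightarrow> r d dvd r (Suc d)"
    and "\<alpha> \<ge> r p"
  shows "\<not> (\<exists>a b c e. length a = \<alpha> \<and> length b = \<alpha> \<and> length c = \<alpha> \<and> length e = \<alpha> \<and>
                striped_K4 (psi r p \<alpha>) a b c e)"
proof
  assume "\<exists>a b c e. length a = \<alpha> \<and> length b = \<alpha> \<and> length c = \<alpha> \<and> length e = \<alpha> \<and>
                striped_K4 (psi r p \<alpha>) a b c e"
  then obtain a b c e where len: "length a = \<alpha>" "length b = \<alpha>" "length c = \<alpha>" "length e = \<alpha>"
    and s: "striped_K4 (psi r p \<alpha>) a b c e" by blast
  have k: "rseq r p \<alpha> p \<ge> 1" using r_pos[OF assms(2,3), of p] assms(1) by (simp add: rseq_def)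
  let ?f = "psi r p \<alpha>"
  have S: "\<And>x y. x \<in> {a,b,c,e} \<Longrightarrow> y \<in> {a,b,c,e} \<Longrightarrow> ?f x y = ?f y x"
    using psi_sym len by auto
  have M: "?f a b = ?f c e" "?f a c = ?f b e" "?f a e = ?f b c" and dist: "distinct [a,b,c,e]"
    using s by (auto simp: striped_K4_def)
  have R: "?f b a = ?f a b" "?f c a = ?f a c" "?f e a = ?f a e" "?f c b = ?f b c" "?f e b = ?f b e"
    "?f e c = ?f c e" "?f c e = ?f a b" "?f b e = ?f a c" "?f b c = ?f a e"
    using S M by auto
  have MM: "?f x y = ?f z w" if "x \<in> {a,b,c,e}" "y \<in> {a,b,c,e}" "z \<in> {a,b,c,e}" "w \<in> {a,b,c,e}"
    "distinct [x,y,z,w]" for x y z w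
    using that dist by (auto simp: R)
  have KK: False if "x \<in> {a,b,c,e}" "y \<in> {a,b,c,e}" "z \<in> {a,b,c,e}" "w \<in> {a,b,c,e}"
    "lex_less x y" "lex_less y z" "lex_less z w" for x y z w
  proof -
    have t1: "lex_less x z" "lex_less y w" using that lex_less_trans by blast+
    have t2: "lex_less x w" using t1 that lex_less_trans by blast
    have "x \<noteq> y" using that(5) lex_less_irrefl by blast
    moreover have "y \<noteq> z" using that(6) lex_less_irrefl by blast
    moreover have "z \<noteq> w" using that(7) lex_less_irrefl by blast
    moreover have "x \<noteq> z" using t1(1) lex_less_irrefl by blast
    moreover have "y \<noteq> w" using t1(2) lex_less_irrefl by blast
    moreover have "x \<noteq> w" using t2 lex_less_irrefl by blast
    ultimately have "distinct [x,y,z,w]" by simp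
    then show False using K[OF k _ _ _ _ that(5-7)] len that MM[of x y z w] MM[of x w y z] by auto
  qed
  have cyc: False if "lex_less x y" "lex_less y z" "lex_less z x" for x y z
    using that lex_less_trans lex_less_irrefl by metis
  have ab: "lex_less a b \<or> lex_less b a" and ac: "lex_less a c \<or> lex_less c a"
    and ae: "lex_less a e \<or> lex_less e a" and bc: "lex_less b c \<or> lex_less c b"
    and be: "lex_less b e \<or> lex_less e b" and ce: "lex_less c e \<or> lex_less e c"
    using lex_less_total[of a b] lex_less_total[of a c] lex_less_total[of a e]
      lex_less_total[of b c] lex_less_total[of b e] lex_less_total[of c e] len dist by auto
  show False
    using ab ac ae bc be ce
    using KK[of a b c e, simplified] KK[of a b e c, simplified] KK[of a c b e, simplified] KK[of a c e b, simplified] KK[of a e b c, simplified] KK[of a e c b, simplified] KK[of b a c e, simplified] KK[of b a e c, simplified] KK[of b c a e, simplified] KK[of b c e a, simplified] KK[of b e a c, simplified] KK[of b e c a, simplified] KK[of c a b e, simplified] KK[of c a e b, simplified] KK[of c b a e, simplified] KK[of c b e a, simplified] KK[of c e a b, simplified] KK[of c e b a, simplified] KK[of e a b c, simplified] KK[of e a c b, simplified] KK[of e b a c, simplified] KK[of e b c a, simplified] KK[of e c a b, simplified] KK[of e c b a, simplified]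
    using cyc[of a b c] cyc[of a b e] cyc[of a c b] cyc[of a c e] cyc[of a e b] cyc[of a e c] cyc[of b a c] cyc[of b a e] cyc[of b c a] cyc[of b c e] cyc[of b e a] cyc[of b e c] cyc[of c a b] cyc[of c a e] cyc[of c b a] cyc[of c b e] cyc[of c e a] cyc[of c e b] cyc[of e a b] cyc[of e a c] cyc[of e b a] cyc[of e b c] cyc[of e c a] cyc[of e c b]
    by argo
qed

end
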